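(* Let $X$ be a cubic vertex-transitive graph for which $1$ is a simple eigenvalue, let $\mathbf{z}$ be a $\pm1$ eigenvector for $1$, $V^+=\{x\mid\mathbf{z}(x)=1\}$, $V^-=\{x\mid \mathbf{z}(x)=-1\}$, and suppose $X[V^+]$ is the disjoint union of cycles $C_1,\dots,C_m$ and $X[V^-]$ is the disjoint union of cycles $D_1,\dots,D_m$, all of length $k$. Let $G$ be the contracted multigraph of $X$. Then every automorphism of $X$ induces an automorphism of $G$, so that $\mathrm{Aut}(X)\le \mathrm{Aut}(G)$, and every subgroup of $\mathrm{Aut}(X)$ acting transitively on $V(X)$ acts transitively on the arcs of $G$. In particular, $G$ is arc-transitive and bipartite.
   Context: The contracted multigraph $G$ of $X$ has $2m$ vertices $c_1,\dots,c_m,d_1,\dots,d_m$ (one for each cycle $C_i$ and each cycle $D_i$), and for each edge of $X$ joining a vertex of $C_i$ to a vertex of $D_r$ there is an edge of $G$ joining $c_i$ and $d_r$ (so parallel edges may occur). An arc of a multigraph is an edge together with a choice of direction. *)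

theory Defs
  imports "Jordan_Normal_Form.Char_Poly"
begin

definition simple_graph :: "'a set \<Rightarrow> ('a \<Rightarrow> 'a \<Rightarrow> bool) \<Rightarrow> bool" where
  "simple_graph V E \<longleftrightarrow> finite V \<and> (\<forall>x y. E x y \<longrightarrow> x \<in> V \<and> y \<in> V)
     \<and> (\<forall>x y. E x y \<longrightarrow> E y x) \<and> (\<forall>x. \<not> E x x)"

definition cubic :: "'a set \<Rightarrow> ('a \<Rightarrow> 'a \<Rightarrow> bool) \<Rightarrow> bool" where
  "cubic V E \<longleftrightarrow> (\<forall>x\<in>V. card {y\<in>V. E x y} = 3)"

(* Automorphisms, taken extensional (identity outside V) so that they form a group of functions. *)
definition graph_aut :: "'a set \<Rightarrow> ('a \<Rightarrow> 'a \<Rightarrow> bool) \<Rightarrow> ('a \<Rightarrow> 'a) set" where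
  "graph_aut V E = {\<sigma>. bij_betw \<sigma> V V \<and> (\<forall>x\<in>V. \<forall>y\<in>V. E x y \<longleftrightarrow> E (\<sigma> x) (\<sigma> y))
                       \<and> (\<forall>x. x \<notin> V \<longrightarrow> \<sigma> x = x)}"

definition vertex_transitive :: "'a set \<Rightarrow> ('a \<Rightarrow> 'a \<Rightarrow> bool) \<Rightarrow> bool" where
  "vertex_transitive V E \<longleftrightarrow> (\<forall>x\<in>V. \<forall>y\<in>V. \<exists>\<sigma>\<in>graph_aut V E. \<sigma> x = y)"

definition aut_inv :: "'a set \<Rightarrow> ('a \<Rightarrow> 'a) \<Rightarrow> 'a \<Rightarrow> 'a" where
  "aut_inv V \<sigma> = (\<lambda>x. if x \<in> V then inv_into V \<sigma> x else x)"

definition aut_subgroup :: "'a set \<Rightarrow> ('a \<Rightarrow> 'a \<Rightarrow> bool) \<Rightarrow> ('a \<Rightarrow> 'a) set \<Rightarrow> bool" where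
  "aut_subgroup V E H \<longleftrightarrow> H \<subseteq> graph_aut V E \<and> id \<in> H
     \<and> (\<forall>\<sigma>\<in>H. \<forall>\<tau>\<in>H. \<sigma> \<circ> \<tau> \<in> H) \<and> (\<forall>\<sigma>\<in>H. aut_inv V \<sigma> \<in> H)"

definition transitive_on :: "('a \<Rightarrow> 'a) set \<Rightarrow> 'a set \<Rightarrow> bool" where
  "transitive_on H V \<longleftrightarrow> (\<forall>x\<in>V. \<forall>y\<in>V. \<exists>\<sigma>\<in>H. \<sigma> x = y)"

(* Adjacency matrix w.r.t. a fixed enumeration of V (the characteristic polynomial
   does not depend on the enumeration). *)
definition vert_enum :: "'a set \<Rightarrow> nat \<Rightarrow> 'a" where
  "vert_enum V = (SOME f. bij_betw f {..<card V} V)"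

definition adj_mat :: "'a set \<Rightarrow> ('a \<Rightarrow> 'a \<Rightarrow> bool) \<Rightarrow> real mat" where
  "adj_mat V E = mat (card V) (card V)
      (\<lambda>(i,j). if E (vert_enum V i) (vert_enum V j) then 1 else 0)"

definition simple_eigenvalue :: "'a set \<Rightarrow> ('a \<Rightarrow> 'a \<Rightarrow> bool) \<Rightarrow> real \<Rightarrow> bool" where
  "simple_eigenvalue V E lam \<longleftrightarrow> order lam (char_poly (adj_mat V E)) = 1"

definition is_eigvec :: "'a set \<Rightarrow> ('a \<Rightarrow> 'a \<Rightarrow> bool) \<Rightarrow> real \<Rightarrow> ('a \<Rightarrow> real) \<Rightarrow> bool" where
  "is_eigvec V E lam f \<longleftrightarrow> (\<exists>x\<in>V. f x \<noteq> 0)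
     \<and> (\<forall>x\<in>V. (\<Sum>y\<in>{y\<in>V. E x y}. f y) = lam * f x)"

definition induced_cycle :: "('a \<Rightarrow> 'a \<Rightarrow> bool) \<Rightarrow> 'a set \<Rightarrow> nat \<Rightarrow> bool" where
  "induced_cycle E S k \<longleftrightarrow> k \<ge> 3 \<and> (\<exists>f. bij_betw f {..<k} S \<and>
      (\<forall>i<k. \<forall>j<k. E (f i) (f j) \<longleftrightarrow> j = Suc i mod k \<or> i = Suc j mod k))"

definition cycle_decomp :: "('a \<Rightarrow> 'a \<Rightarrow> bool) \<Rightarrow> 'a set \<Rightarrow> nat \<Rightarrow> (nat \<Rightarrow> 'a set) \<Rightarrow> nat \<Rightarrow> bool" where
  "cycle_decomp E U m C k \<longleftrightarrow> (\<Union>i<m. C i) = U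
     \<and> (\<forall>i<m. \<forall>j<m. i \<noteq> j \<longrightarrow> C i \<inter> C j = {})
     \<and> (\<forall>i<m. induced_cycle E (C i) k)
     \<and> (\<forall>i<m. \<forall>j<m. i \<noteq> j \<longrightarrow> (\<forall>x\<in>C i. \<forall>y\<in>C j. \<not> E x y))"

(* Contracted multigraph G: vertices Inl i = c_i, Inr r = d_r;
   edges = edges {x,y} of X with x in V+ and y in V- (labelled by themselves);
   an edge {x,y} with x in C_i, y in D_r joins c_i and d_r. *)
definition blk :: "nat \<Rightarrow> (nat \<Rightarrow> 'a set) \<Rightarrow> (nat \<Rightarrow> 'a set) \<Rightarrow> 'a \<Rightarrow> nat + nat" where
  "blk m C D x = (if \<exists>i<m. x \<in> C i then Inl (THE i. i < m \<and> x \<in> C i)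
                  else Inr (THE r. r < m \<and> x \<in> D r))"

definition cG_verts :: "nat \<Rightarrow> (nat + nat) set" where
  "cG_verts m = Inl ` {..<m} \<union> Inr ` {..<m}"

definition cG_edges :: "'a set \<Rightarrow> ('a \<Rightarrow> 'a \<Rightarrow> bool) \<Rightarrow> ('a \<Rightarrow> real) \<Rightarrow> 'a set set" where
  "cG_edges V E z = {{x, y} | x y. x \<in> V \<and> y \<in> V \<and> E x y \<and> z x = 1 \<and> z y = -1}"

definition cG_inc :: "nat \<Rightarrow> (nat \<Rightarrow> 'a set) \<Rightarrow> (nat \<Rightarrow> 'a set) \<Rightarrow> 'a set \<Rightarrow> (nat + nat) set" where
  "cG_inc m C D e = blk m C D ` e"

(* General multigraphs (VG, EG, inc), inc e = set of endpoints of edge e *)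
definition mg_aut :: "'v set \<Rightarrow> 'e set \<Rightarrow> ('e \<Rightarrow> 'v set) \<Rightarrow> (('v \<Rightarrow> 'v) \<times> ('e \<Rightarrow> 'e)) set" where
  "mg_aut VG EG inc = {(\<phi>, \<psi>). bij_betw \<phi> VG VG \<and> bij_betw \<psi> EG EG
       \<and> (\<forall>e\<in>EG. inc (\<psi> e) = \<phi> ` inc e)}"

(* Arcs: an edge together with a choice of direction (tail, head) *)
definition mg_arcs :: "'v set \<Rightarrow> 'e set \<Rightarrow> ('e \<Rightarrow> 'v set) \<Rightarrow> ('e \<times> 'v \<times> 'v) set" where
  "mg_arcs VG EG inc = {(e, u, v). e \<in> EG \<and> inc e = {u, v}}"

definition mg_arc_map :: "('v \<Rightarrow> 'v) \<times> ('e \<Rightarrow> 'e) \<Rightarrow> 'e \<times> 'v \<times> 'v \<Rightarrow> 'e \<times> 'v \<times> 'v" where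
  "mg_arc_map g a = (case g of (\<phi>, \<psi>) \<Rightarrow> case a of (e, u, v) \<Rightarrow> (\<psi> e, \<phi> u, \<phi> v))"

definition arc_transitive_by :: "'v set \<Rightarrow> 'e set \<Rightarrow> ('e \<Rightarrow> 'v set)
     \<Rightarrow> (('v \<Rightarrow> 'v) \<times> ('e \<Rightarrow> 'e)) set \<Rightarrow> bool" where
  "arc_transitive_by VG EG inc A \<longleftrightarrow>
     (\<forall>a\<in>mg_arcs VG EG inc. \<forall>b\<in>mg_arcs VG EG inc. \<exists>g\<in>A. mg_arc_map g a = b)"

definition mg_arc_transitive :: "'v set \<Rightarrow> 'e set \<Rightarrow> ('e \<Rightarrow> 'v set) \<Rightarrow> bool" where
  "mg_arc_transitive VG EG inc \<longleftrightarrow> arc_transitive_by VG EG inc (mg_aut VG EG inc)"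

definition mg_bipartite_cd :: "nat \<Rightarrow> 'e set \<Rightarrow> ('e \<Rightarrow> (nat + nat) set) \<Rightarrow> bool" where
  "mg_bipartite_cd m EG inc \<longleftrightarrow> (\<forall>e\<in>EG. \<exists>i<m. \<exists>r<m. inc e = {Inl i, Inr r})"

definition induced_aut :: "nat \<Rightarrow> (nat \<Rightarrow> 'a set) \<Rightarrow> (nat \<Rightarrow> 'a set) \<Rightarrow> 'a set
     \<Rightarrow> ('a \<Rightarrow> 'a) \<Rightarrow> ((nat + nat) \<Rightarrow> (nat + nat)) \<times> ('a set \<Rightarrow> 'a set) \<Rightarrow> bool" where
  "induced_aut m C D V \<sigma> g \<longleftrightarrow> (\<forall>x\<in>V. fst g (blk m C D x) = blk m C D (\<sigma> x))
       \<and> (\<forall>e. snd g e = \<sigma> ` e)"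

end

theory Submission
  imports Defs "Jordan_Normal_Form.Jordan_Normal_Form_Uniqueness" "Jordan_Normal_Form.Jordan_Normal_Form_Existence"
begin

lemma kernel_dim_le1_dep:
  fixes M :: "complex mat"
  assumes M: "M \<in> carrier_mat n n" and kd: "kernel_dim M \<le> 1"
    and v: "v \<in> mat_kernel M" "v \<noteq> 0\<^sub>v n" and w: "w \<in> mat_kernel M"
  shows "\<exists>c. w = c \<cdot>\<^sub>v v"
proof -
  interpret K: kernel n n M by (unfold_locales, rule M)
  have dim: "K.dim \<le> 1" using kd by simp
  from kernel_basis_exists[OF M] obtain B where B: "finite B" "K.basis B" by auto
  have fd: "K.Ker.fin_dim" unfolding K.Ker.fin_dim_def using B unfolding K.Ker.basis_def by auto
  have vc: "v \<in> carrier_vec n" "w \<in> carrier_vec n" using v w mat_kernel[OF M] by auto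
  have spanv: "x \<in> K.span {v} \<Longrightarrow> \<exists>c. x = c \<cdot>\<^sub>v v" for x
  proof -
    assume "x \<in> K.span {v}"
    hence "x \<in> K.NC.span {v}" using K.span_same v by auto
    then obtain a U where U: "finite U" "U \<subseteq> {v}" "x = K.NC.lincomb a U"
      unfolding K.NC.span_def by auto
    have xc: "x = (if U = {} then 0 else a v) \<cdot>\<^sub>v v"
    proof (rule eq_vecI)
      fix i assume "i < dim_vec ((if U = {} then 0 else a v) \<cdot>\<^sub>v v)"
      hence i: "i < n" using vc by auto
      have "x $ i = (\<Sum>y\<in>U. a y * y $ i)" using U K.NC.lincomb_index[OF i, of U a] vc by auto
      also have "\<dots> = (if U = {} then 0 else a v) * v $ i" using U by (cases "U = {}") (simp_all add: subset_singleton_iff)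
      finally show "x $ i = ((if U = {} then 0 else a v) \<cdot>\<^sub>v v) $ i" using i vc by simp
    next
      have Uc: "U \<subseteq> carrier_vec n" using U vc by auto
      have "x \<in> carrier_vec n" unfolding U(3) using K.NC.lincomb_closed[OF Uc] by simp
      then show "dim_vec x = dim_vec ((if U = {} then 0 else a v) \<cdot>\<^sub>v v)" using vc by simp
    qed
    thus ?thesis by blast
  qed
  have li1: "K.lin_indpt {v}"
  proof
    assume "K.lin_dep {v}"
    then obtain A a u where A: "finite A" "A \<subseteq> {v}" "K.lincomb a A = 0\<^sub>v n" "u \<in> A" "a u \<noteq> 0"
      unfolding K.Ker.lin_dep_def by auto
    have Av: "A = {v}" "u = v" using A by auto
    have "v = 0\<^sub>v n"
    proof (rule eq_vecI)
      fix i assume "i < dim_vec (0\<^sub>v n)" hence i: "i < n" by simp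
      have "K.lincomb a A $ i = a v * v $ i" using K.lincomb_index[OF i, of A a] Av v by auto
      with A(3) i have "a v * v $ i = 0" by simp
      thus "v $ i = 0\<^sub>v n $ i" using A(5) Av i by simp
    qed (use vc in simp)
    with v show False by simp
  qed
  show ?thesis
  proof (cases "w \<in> K.span {v}")
    case True thus ?thesis using spanv by blast
  next
    case False
    have "v \<in> K.span {v}" using K.Ker.in_own_span v by auto
    hence wv: "w \<notin> {v}" using False by auto
    have "K.lin_dep ({v} \<union> {w}) \<longleftrightarrow> w \<in> K.span {v}"
      using K.Ker.lin_dep_iff_in_span[of "{v}" w] v w li1 wv by auto
    hence li2: "K.lin_indpt {v, w}" using False by (simp add: insert_commute)
    have "card {v, w} \<le> K.dim" using K.Ker.li_le_dim(2)[OF fd _ li2] v w by auto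
    moreover have "card {v, w} = 2" using wv by auto
    ultimately show ?thesis using dim by simp
  qed
qed

lemma simple_eig_dep:
  fixes A :: "real mat"
  assumes A: "A \<in> carrier_mat n n" and ord: "Polynomial.order 1 (char_poly A) = 1"
    and v: "v \<in> carrier_vec n" "A *\<^sub>v v = v" "v \<noteq> 0\<^sub>v n"
    and w: "w \<in> carrier_vec n" "A *\<^sub>v w = w"
  shows "\<exists>c::complex. map_vec complex_of_real w = c \<cdot>\<^sub>v map_vec complex_of_real v"
proof -
  let ?A = "map_mat complex_of_real A"
  let ?v = "map_vec complex_of_real v"
  let ?w = "map_vec complex_of_real w"
  have Ac: "?A \<in> carrier_mat n n" using A by simp
  have cp: "char_poly ?A = map_poly complex_of_real (char_poly A)"
    by (rule of_real_hom.char_poly_hom[OF A])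
  interpret ph: map_poly_inj_idom_divide_hom complex_of_real ..
  have ordc: "Polynomial.order 1 (char_poly ?A) = 1"
    unfolding cp using ph.order_hom[of 1 "char_poly A"] ord by simp
  from char_poly_factorized[OF Ac] obtain as where "char_poly ?A = (\<Prod>a\<leftarrow>as. [:- a, 1:])" by auto
  from jordan_nf_exists[OF Ac this] obtain n_as where jnf: "jordan_nf ?A n_as" ..
  have s1: "sum_list (map fst (filter (\<lambda> na. snd na = 1) n_as)) = 1"
    using jordan_nf_order[OF jnf, of 1] ordc by simp
  have le: "(\<Sum> n \<leftarrow> map fst [(n, e)\<leftarrow>n_as . e = 1]. min 1 n) \<le> sum_list (map fst (filter (\<lambda> na. snd na = 1) n_as))"
  proof -
    have "[(n, e)\<leftarrow>n_as . e = 1] = filter (\<lambda> na. snd na = 1) n_as"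
      by (induct n_as) auto
    moreover have "(\<Sum> n \<leftarrow> xs. min 1 n) \<le> sum_list xs" for xs :: "nat list"
      by (induct xs) auto
    ultimately show ?thesis by metis
  qed
  have "dim_gen_eigenspace ?A 1 1 \<le> 1"
    using dim_gen_eigenspace[OF jnf, of 1 1] le s1 by simp
  hence kd: "kernel_dim (char_matrix ?A 1) \<le> 1"
    unfolding dim_gen_eigenspace_def using Ac by simp
  have M: "char_matrix ?A 1 \<in> carrier_mat n n" using Ac by simp
  have Av: "?A *\<^sub>v ?v = ?v"
    using of_real_hom.mult_mat_vec_hom[OF A v(1)] v(2) by metis
  have Aw: "?A *\<^sub>v ?w = ?w"
    using of_real_hom.mult_mat_vec_hom[OF A w(1)] w(2) by metis
  have vnz: "?v \<noteq> 0\<^sub>v n" using v(3) by simp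
  have "eigenvector ?A ?v 1" unfolding eigenvector_def using Av vnz v(1) Ac by simp
  hence kv: "?v \<in> mat_kernel (char_matrix ?A 1)"
    using eigenvector_char_matrix[OF Ac] M by (auto intro: mat_kernelI)
  show ?thesis
  proof (cases "?w = 0\<^sub>v n")
    case True
    have "?w = 0 \<cdot>\<^sub>v ?v" unfolding True by (rule eq_vecI, use v in auto)
    then show ?thesis by blast
  next
    case False
    have "eigenvector ?A ?w 1" unfolding eigenvector_def using Aw False w(1) Ac by simp
    hence kw: "?w \<in> mat_kernel (char_matrix ?A 1)"
      using eigenvector_char_matrix[OF Ac] M by (auto intro: mat_kernelI)
    show ?thesis using kernel_dim_le1_dep[OF M kd kv vnz kw] .
  qed
qed



lemma vert_enum_bij: assumes "finite V" shows "bij_betw (vert_enum V) {..<card V} V"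
proof -
  have "\<exists>f. bij_betw f {..<card V} V"
    using ex_bij_betw_nat_finite[OF assms] by (simp add: atLeast0LessThan)
  thus ?thesis unfolding vert_enum_def by (rule someI_ex)
qed

locale L4 =
  fixes V :: "'a set" and E :: "'a \<Rightarrow> 'a \<Rightarrow> bool" and z :: "'a \<Rightarrow> real"
    and m k :: nat and C D :: "nat \<Rightarrow> 'a set"
  assumes sg: "simple_graph V E" and cub: "cubic V E"
    and se: "simple_eigenvalue V E 1"
    and pm: "\<forall>x\<in>V. z x = 1 \<or> z x = -1"
    and ev: "is_eigvec V E 1 z"
    and cdC: "cycle_decomp E {x\<in>V. z x = 1} m C k"
    and cdD: "cycle_decomp E {x\<in>V. z x = -1} m D k"
begin

lemma finV: "finite V" using sg unfolding simple_graph_def by auto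
lemma Ein: "E x y \<Longrightarrow> x \<in> V \<and> y \<in> V" using sg unfolding simple_graph_def by auto
lemma Esym: "E x y \<Longrightarrow> E y x" using sg unfolding simple_graph_def by auto
lemma evx: "x \<in> V \<Longrightarrow> (\<Sum>y\<in>{y\<in>V. E x y}. z y) = z x" using ev unfolding is_eigvec_def by auto

lemma aut_bij: "\<sigma> \<in> graph_aut V E \<Longrightarrow> bij_betw \<sigma> V V" unfolding graph_aut_def by auto
lemma aut_E: "\<sigma> \<in> graph_aut V E \<Longrightarrow> x \<in> V \<Longrightarrow> y \<in> V \<Longrightarrow> E x y \<longleftrightarrow> E (\<sigma> x) (\<sigma> y)"
  unfolding graph_aut_def by auto
lemma aut_V: "\<sigma> \<in> graph_aut V E \<Longrightarrow> x \<in> V \<Longrightarrow> \<sigma> x \<in> V"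
  using aut_bij bij_betwE by blast

lemma nbr_bij: assumes s: "\<sigma> \<in> graph_aut V E" and x: "x \<in> V"
  shows "bij_betw \<sigma> {y\<in>V. E x y} {y\<in>V. E (\<sigma> x) y}"
proof -
  have b: "bij_betw \<sigma> V V" using aut_bij[OF s] .
  have inj: "inj_on \<sigma> {y\<in>V. E x y}" using bij_betw_imp_inj_on[OF b] by (rule inj_on_subset) auto
  have "\<sigma> ` {y\<in>V. E x y} = {y\<in>V. E (\<sigma> x) y}"
  proof
    show "\<sigma> ` {y\<in>V. E x y} \<subseteq> {y\<in>V. E (\<sigma> x) y}" using aut_E[OF s x] aut_V[OF s] by auto
    show "{y\<in>V. E (\<sigma> x) y} \<subseteq> \<sigma> ` {y\<in>V. E x y}"
    proof
      fix y assume y: "y \<in> {y\<in>V. E (\<sigma> x) y}"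
      then obtain u where u: "u \<in> V" "y = \<sigma> u" using bij_betw_imp_surj_on[OF b] by auto
      with y aut_E[OF s x u(1)] show "y \<in> \<sigma> ` {y\<in>V. E x y}" by auto
    qed
  qed
  with inj show ?thesis unfolding bij_betw_def by simp
qed

lemma sum_enum:
  fixes g :: "'a \<Rightarrow> real"
  assumes x: "x \<in> V"
  shows "(\<Sum>j<card V. (if E x (vert_enum V j) then 1 else 0) * g (vert_enum V j)) = (\<Sum>y\<in>{y\<in>V. E x y}. g y)"
proof -
  have "(\<Sum>j<card V. (if E x (vert_enum V j) then 1 else 0) * g (vert_enum V j))
      = (\<Sum>y\<in>V. (if E x y then 1 else 0) * g y)"
    using sum.reindex_bij_betw[OF vert_enum_bij[OF finV], of "\<lambda>y. (if E x y then 1 else 0) * g y"] by simp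
  also have "\<dots> = (\<Sum>y\<in>V. if E x y then g y else 0)" by (rule sum.cong) auto
  also have "\<dots> = (\<Sum>y\<in>{y\<in>V. E x y}. g y)" using sum.inter_filter[OF finV, of g "E x"] by simp
  finally show ?thesis .
qed

lemma adj_mult:
  assumes i: "i < card V" and u: "u \<in> carrier_vec (card V)"
  shows "(adj_mat V E *\<^sub>v u) $ i = (\<Sum>j<card V. (if E (vert_enum V i) (vert_enum V j) then 1 else 0) * u $ j)"
  using i u unfolding adj_mat_def by (auto simp: scalar_prod_def atLeast0LessThan)

lemma sign: assumes s: "\<sigma> \<in> graph_aut V E"
  shows "\<exists>c. (c = 1 \<or> c = -1) \<and> (\<forall>x\<in>V. z (\<sigma> x) = c * z x)"
proof -
  define n where "n = card V"
  define f where "f = vert_enum V"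
  have fb: "bij_betw f {..<n} V" unfolding f_def n_def by (rule vert_enum_bij[OF finV])
  define A where "A = adj_mat V E"
  have A: "A \<in> carrier_mat n n" unfolding A_def adj_mat_def n_def by simp
  define v where "v = vec n (\<lambda>i. z (f i))"
  define w where "w = vec n (\<lambda>i. z (\<sigma> (f i)))"
  have fV: "i < n \<Longrightarrow> f i \<in> V" for i using fb bij_betwE by blast
  have vc: "v \<in> carrier_vec n" "w \<in> carrier_vec n" unfolding v_def w_def by auto
  have Av: "A *\<^sub>v v = v"
  proof (rule eq_vecI)
    fix i assume "i < dim_vec v" hence i: "i < n" unfolding v_def by simp
    have "(A *\<^sub>v v) $ i = (\<Sum>j<n. (if E (f i) (f j) then 1 else 0) * z (f j))"
      unfolding A_def f_def n_def using adj_mult[of i v] i vc unfolding n_def v_def f_def by simp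
    also have "\<dots> = (\<Sum>y\<in>{y\<in>V. E (f i) y}. z y)" unfolding n_def f_def by (rule sum_enum, use fV i in \<open>simp add: f_def n_def\<close>)
    also have "\<dots> = z (f i)" using evx fV i by simp
    finally show "(A *\<^sub>v v) $ i = v $ i" unfolding v_def using i by simp
  qed (use A in \<open>simp add: v_def\<close>)
  have Aw: "A *\<^sub>v w = w"
  proof (rule eq_vecI)
    fix i assume "i < dim_vec w" hence i: "i < n" unfolding w_def by simp
    have "(A *\<^sub>v w) $ i = (\<Sum>j<n. (if E (f i) (f j) then 1 else 0) * z (\<sigma> (f j)))"
      unfolding A_def f_def n_def using adj_mult[of i w] i vc unfolding n_def w_def f_def by simp
    also have "\<dots> = (\<Sum>y\<in>{y\<in>V. E (f i) y}. z (\<sigma> y))" unfolding n_def f_def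
      by (rule sum_enum, use fV i in \<open>simp add: f_def n_def\<close>)
    also have "\<dots> = (\<Sum>y\<in>{y\<in>V. E (\<sigma> (f i)) y}. z y)"
      using sum.reindex_bij_betw[OF nbr_bij[OF s fV[OF i]], of z] .
    also have "\<dots> = z (\<sigma> (f i))" using evx aut_V[OF s] fV i by simp
    finally show "(A *\<^sub>v w) $ i = w $ i" unfolding w_def using i by simp
  qed (use A in \<open>simp add: w_def\<close>)
  obtain x0 where x0: "x0 \<in> V" "z x0 \<noteq> 0" using ev unfolding is_eigvec_def by auto
  have n0: "0 < n" unfolding n_def using x0 finV card_gt_0_iff by blast
  have vnz: "v \<noteq> 0\<^sub>v n"
  proof
    assume "v = 0\<^sub>v n"
    hence "z (f 0) = 0" using n0 unfolding v_def by (metis index_vec index_zero_vec(1))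
    thus False using pm fV[OF n0] by force
  qed
  have so: "Polynomial.order 1 (char_poly A) = 1" using se unfolding simple_eigenvalue_def A_def .
  from simple_eig_dep[OF A so vc(1) Av vnz vc(2) Aw] obtain c where
    c: "map_vec complex_of_real w = c \<cdot>\<^sub>v map_vec complex_of_real v" by blast
  have ci: "complex_of_real (z (\<sigma> (f i))) = c * complex_of_real (z (f i))" if i: "i < n" for i
  proof -
    have "map_vec complex_of_real w $ i = (c \<cdot>\<^sub>v map_vec complex_of_real v) $ i" using c by simp
    thus ?thesis using i unfolding v_def w_def by simp
  qed
  define s0 where "s0 = z (\<sigma> (f 0)) * z (f 0)"
  have zf0: "z (f 0) * z (f 0) = 1" using pm fV[OF n0] by force
  have cs: "c = complex_of_real s0"
  proof -
    have "complex_of_real s0 = c * complex_of_real (z (f 0) * z (f 0))"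
      unfolding s0_def using ci[OF n0] by (simp add: algebra_simps)
    thus ?thesis using zf0 by simp
  qed
  have s01: "s0 = 1 \<or> s0 = -1"
  proof -
    have a: "z (f 0) = 1 \<or> z (f 0) = -1" using pm fV[OF n0] by blast
    have b: "z (\<sigma> (f 0)) = 1 \<or> z (\<sigma> (f 0)) = -1" using pm aut_V[OF s fV[OF n0]] by blast
    from a b show ?thesis unfolding s0_def by (elim disjE) auto
  qed
  have "\<forall>x\<in>V. z (\<sigma> x) = s0 * z x"
  proof
    fix x assume x: "x \<in> V"
    then obtain i where i: "i < n" "x = f i" using fb bij_betw_imp_surj_on by (metis imageE lessThan_iff)
    have "complex_of_real (z (\<sigma> x)) = complex_of_real (s0 * z x)" using ci[OF i(1)] i(2) cs by simp
    thus "z (\<sigma> x) = s0 * z x" using of_real_eq_iff by blast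
  qed
  with s01 show ?thesis by blast
qed

lemma opp_card: assumes x: "x \<in> V" shows "card {y\<in>V. E x y \<and> z y = - z x} = 1"
proof -
  let ?N = "{y\<in>V. E x y}"
  let ?S = "{y\<in>V. E x y \<and> z y = z x}"
  let ?O = "{y\<in>V. E x y \<and> z y = - z x}"
  have zx: "z x \<noteq> 0" using pm x by force
  have fin: "finite ?S" "finite ?O" using finV by auto
  have zz: "z y = z x \<or> z y = - z x" if y: "y \<in> V" for y
  proof -
    have a: "z y = 1 \<or> z y = -1" using pm y by blast
    have b: "z x = 1 \<or> z x = -1" using pm x by blast
    from a b show ?thesis by (elim disjE) auto
  qed
  have un: "?N = ?S \<union> ?O" using zz by auto
  have dis: "?S \<inter> ?O = {}" using zx by auto
  have c3: "card ?N = 3" using cub x unfolding cubic_def by auto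
  have cc: "card ?S + card ?O = 3" using c3 un dis card_Un_disjoint[OF fin dis] by simp
  have "z x = (\<Sum>y\<in>?N. z y)" using evx[OF x] by simp
  also have "\<dots> = (\<Sum>y\<in>?S. z y) + (\<Sum>y\<in>?O. z y)" unfolding un by (rule sum.union_disjoint[OF fin dis])
  also have "(\<Sum>y\<in>?S. z y) = (\<Sum>y\<in>?S. z x)" by (rule sum.cong) auto
  also have "(\<Sum>y\<in>?O. z y) = (\<Sum>y\<in>?O. - z x)" by (rule sum.cong) auto
  finally have "z x = real (card ?S) * z x - real (card ?O) * z x" by simp
  hence "(real (card ?S) - real (card ?O) - 1) * z x = 0" by (simp add: algebra_simps)
  hence "real (card ?S) - real (card ?O) - 1 = 0" using zx by simp
  with cc show ?thesis by linarith
qed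

end


context L4 begin

lemma Cprops: "i < m \<Longrightarrow> x \<in> C i \<Longrightarrow> x \<in> V \<and> z x = 1"
  using cdC unfolding cycle_decomp_def by blast
lemma Dprops: "r < m \<Longrightarrow> x \<in> D r \<Longrightarrow> x \<in> V \<and> z x = -1"
  using cdD unfolding cycle_decomp_def by blast
lemma Cdisj: "i < m \<Longrightarrow> j < m \<Longrightarrow> x \<in> C i \<Longrightarrow> x \<in> C j \<Longrightarrow> i = j"
  using cdC unfolding cycle_decomp_def by blast
lemma Ddisj: "i < m \<Longrightarrow> j < m \<Longrightarrow> x \<in> D i \<Longrightarrow> x \<in> D j \<Longrightarrow> i = j"
  using cdD unfolding cycle_decomp_def by blast
lemma Cnoedge: "i < m \<Longrightarrow> j < m \<Longrightarrow> x \<in> C i \<Longrightarrow> y \<in> C j \<Longrightarrow> E x y \<Longrightarrow> i = j"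
  using cdC unfolding cycle_decomp_def by blast
lemma Dnoedge: "i < m \<Longrightarrow> j < m \<Longrightarrow> x \<in> D i \<Longrightarrow> y \<in> D j \<Longrightarrow> E x y \<Longrightarrow> i = j"
  using cdD unfolding cycle_decomp_def by blast
lemma Ccov: "x \<in> V \<Longrightarrow> z x = 1 \<Longrightarrow> \<exists>i<m. x \<in> C i"
  using cdC unfolding cycle_decomp_def by blast
lemma Dcov: "x \<in> V \<Longrightarrow> z x = -1 \<Longrightarrow> \<exists>i<m. x \<in> D i"
  using cdD unfolding cycle_decomp_def by blast
lemma Ccyc: "i < m \<Longrightarrow> induced_cycle E (C i) k"
  using cdC unfolding cycle_decomp_def by blast
lemma Dcyc: "i < m \<Longrightarrow> induced_cycle E (D i) k"
  using cdD unfolding cycle_decomp_def by blast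

lemma blk_C: "i < m \<Longrightarrow> x \<in> C i \<Longrightarrow> blk m C D x = Inl i"
  unfolding blk_def using Cdisj by (auto intro!: the_equality)

lemma blk_D: "r < m \<Longrightarrow> x \<in> D r \<Longrightarrow> blk m C D x = Inr r"
proof -
  assume r: "r < m" "x \<in> D r"
  have "\<not> (\<exists>i<m. x \<in> C i)" using Cprops Dprops r by force
  thus ?thesis unfolding blk_def using Ddisj r by (auto intro!: the_equality)
qed

lemma blk_cases: "x \<in> V \<Longrightarrow> (\<exists>i<m. x \<in> C i \<and> blk m C D x = Inl i) \<or> (\<exists>r<m. x \<in> D r \<and> blk m C D x = Inr r)"
proof -
  assume x: "x \<in> V"
  from pm x have "z x = 1 \<or> z x = -1" by blast
  thus ?thesis
  proof
    assume "z x = 1"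
    then obtain i where "i < m" "x \<in> C i" using Ccov x by blast
    thus ?thesis using blk_C by blast
  next
    assume "z x = -1"
    then obtain i where "i < m" "x \<in> D i" using Dcov x by blast
    thus ?thesis using blk_D by blast
  qed
qed

lemma blk_in: "x \<in> V \<Longrightarrow> blk m C D x \<in> cG_verts m"
  using blk_cases unfolding cG_verts_def by blast

lemma same_blk: "x \<in> V \<Longrightarrow> y \<in> V \<Longrightarrow> blk m C D x = blk m C D y \<Longrightarrow>
   (\<exists>i<m. x \<in> C i \<and> y \<in> C i) \<or> (\<exists>r<m. x \<in> D r \<and> y \<in> D r)"
  using blk_cases[of x] blk_cases[of y] by auto

lemma adj_same: assumes "x \<in> V" "y \<in> V" "E x y" "z x = z y" shows "blk m C D x = blk m C D y"
proof -
  from blk_cases[OF assms(1)] show ?thesis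
  proof
    assume "\<exists>i<m. x \<in> C i \<and> blk m C D x = Inl i"
    then obtain i where i: "i < m" "x \<in> C i" "blk m C D x = Inl i" by blast
    have "z y = 1" using Cprops i assms by auto
    then obtain j where j: "j < m" "y \<in> C j" using Ccov assms by blast
    have "i = j" using Cnoedge i j assms by blast
    thus ?thesis using i j blk_C by simp
  next
    assume "\<exists>i<m. x \<in> D i \<and> blk m C D x = Inr i"
    then obtain i where i: "i < m" "x \<in> D i" "blk m C D x = Inr i" by blast
    have "z y = -1" using Dprops i assms by auto
    then obtain j where j: "j < m" "y \<in> D j" using Dcov assms by blast
    have "i = j" using Dnoedge i j assms by blast
    thus ?thesis using i j blk_D by simp
  qed
qed

lemma cycle_conn:
  assumes cyc: "induced_cycle E B k" and h: "\<And>a b. a \<in> B \<Longrightarrow> b \<in> B \<Longrightarrow> E a b \<Longrightarrow> h a = h b"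
    and a: "a \<in> B" and b: "b \<in> B"
  shows "h a = h b"
proof -
  obtain f where f: "bij_betw f {..<k} B" and fE: "\<forall>i<k. \<forall>j<k. E (f i) (f j) \<longleftrightarrow> j = Suc i mod k \<or> i = Suc j mod k"
    using cyc unfolding induced_cycle_def by blast
  have fB: "j < k \<Longrightarrow> f j \<in> B" for j using f bij_betwE by blast
  have all: "j < k \<Longrightarrow> h (f j) = h (f 0)" for j
  proof (induct j)
    case (Suc j)
    have jk: "j < k" "Suc j < k" using Suc.prems by auto
    have md: "Suc j mod k = Suc j" using jk by simp
    have "E (f j) (f (Suc j))" using fE[rule_format, OF jk(1) jk(2)] md by simp
    hence "h (f j) = h (f (Suc j))" by (rule h[OF fB[OF jk(1)] fB[OF jk(2)]])
    thus ?case using Suc.hyps jk(1) by simp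
  qed simp
  have fim: "f ` {..<k} = B" using f bij_betw_imp_surj_on by blast
  obtain ia where ia: "ia < k" "a = f ia" using a fim by blast
  obtain ib where ib: "ib < k" "b = f ib" using b fim by blast
  have 1: "h a = h (f 0)" unfolding ia(2) by (rule all[OF ia(1)])
  have 2: "h b = h (f 0)" unfolding ib(2) by (rule all[OF ib(1)])
  show ?thesis using 1 2 by (rule trans[OF _ sym])
qed

lemma blk_pres: assumes s: "\<sigma> \<in> graph_aut V E" and x: "x \<in> V" and y: "y \<in> V"
  and eq: "blk m C D x = blk m C D y"
  shows "blk m C D (\<sigma> x) = blk m C D (\<sigma> y)"
proof -
  obtain c where c: "c = 1 \<or> c = -1" "\<forall>x\<in>V. z (\<sigma> x) = c * z x" using sign[OF s] by blast
  have key: "\<And>a b. a \<in> V \<Longrightarrow> b \<in> V \<Longrightarrow> E a b \<Longrightarrow> z a = z b \<Longrightarrow> blk m C D (\<sigma> a) = blk m C D (\<sigma> b)"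
  proof -
    fix a b assume ab: "a \<in> V" "b \<in> V" "E a b" "z a = z b"
    show "blk m C D (\<sigma> a) = blk m C D (\<sigma> b)"
      by (rule adj_same, use aut_V[OF s] ab aut_E[OF s] c(2) in auto)
  qed
  from same_blk[OF x y eq] show ?thesis
  proof
    assume "\<exists>i<m. x \<in> C i \<and> y \<in> C i"
    then obtain i where i: "i < m" "x \<in> C i" "y \<in> C i" by blast
    show ?thesis
      by (rule cycle_conn[OF Ccyc[OF i(1)] _ i(2,3), of "\<lambda>a. blk m C D (\<sigma> a)"],
          rule key, use Cprops i(1) in auto)
  next
    assume "\<exists>i<m. x \<in> D i \<and> y \<in> D i"
    then obtain i where i: "i < m" "x \<in> D i" "y \<in> D i" by blast
    show ?thesis
      by (rule cycle_conn[OF Dcyc[OF i(1)] _ i(2,3), of "\<lambda>a. blk m C D (\<sigma> a)"],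
          rule key, use Dprops i(1) in auto)
  qed
qed

lemma aut_inv_eq: "x \<in> V \<Longrightarrow> aut_inv V \<sigma> x = inv_into V \<sigma> x"
  unfolding aut_inv_def by simp

lemma aut_inv_out: "x \<notin> V \<Longrightarrow> aut_inv V \<sigma> x = x"
  unfolding aut_inv_def by simp

lemma aut_inv_aut: assumes s: "\<sigma> \<in> graph_aut V E"
  shows "aut_inv V \<sigma> \<in> graph_aut V E" "\<And>x. x \<in> V \<Longrightarrow> aut_inv V \<sigma> (\<sigma> x) = x"
    "\<And>x. x \<in> V \<Longrightarrow> \<sigma> (aut_inv V \<sigma> x) = x"
proof -
  have b: "bij_betw \<sigma> V V" using aut_bij[OF s] .
  have inj: "inj_on \<sigma> V" using bij_betw_imp_inj_on[OF b] .
  have sur: "\<sigma> ` V = V" using bij_betw_imp_surj_on[OF b] .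
  show inv1: "aut_inv V \<sigma> (\<sigma> x) = x" if x: "x \<in> V" for x
  proof -
    have "aut_inv V \<sigma> (\<sigma> x) = inv_into V \<sigma> (\<sigma> x)" by (rule aut_inv_eq[OF aut_V[OF s x]])
    also have "\<dots> = x" by (rule inv_into_f_f[OF inj x])
    finally show ?thesis .
  qed
  show inv2: "\<sigma> (aut_inv V \<sigma> x) = x" if x: "x \<in> V" for x
  proof -
    have xx: "x \<in> \<sigma> ` V" using x sur by (simp only:)
    have "\<sigma> (aut_inv V \<sigma> x) = \<sigma> (inv_into V \<sigma> x)" by (simp only: aut_inv_eq[OF x])
    also have "\<dots> = x" by (rule f_inv_into_f[OF xx])
    finally show ?thesis .
  qed
  have bi: "bij_betw (aut_inv V \<sigma>) V V"
  proof -
    have b2: "bij_betw (inv_into V \<sigma>) V V" using bij_betw_inv_into[OF b] .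
    show ?thesis by (rule bij_betw_cong[THEN iffD1, OF _ b2]) (simp add: aut_inv_eq)
  qed
  have tV: "x \<in> V \<Longrightarrow> aut_inv V \<sigma> x \<in> V" for x using bi bij_betwE by blast
  have adj: "\<forall>x\<in>V. \<forall>y\<in>V. E x y \<longleftrightarrow> E (aut_inv V \<sigma> x) (aut_inv V \<sigma> y)"
  proof (intro ballI)
    fix x y assume xy: "x \<in> V" "y \<in> V"
    have "E (aut_inv V \<sigma> x) (aut_inv V \<sigma> y) \<longleftrightarrow> E (\<sigma> (aut_inv V \<sigma> x)) (\<sigma> (aut_inv V \<sigma> y))"
      using aut_E[OF s tV[OF xy(1)] tV[OF xy(2)]] .
    also have "\<dots> \<longleftrightarrow> E x y" by (simp only: inv2[OF xy(1)] inv2[OF xy(2)])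
    finally show "E x y \<longleftrightarrow> E (aut_inv V \<sigma> x) (aut_inv V \<sigma> y)" by (rule sym)
  qed
  have out: "\<forall>x. x \<notin> V \<longrightarrow> aut_inv V \<sigma> x = x" using aut_inv_out by blast
  show "aut_inv V \<sigma> \<in> graph_aut V E" unfolding graph_aut_def using bi adj out by (simp only: mem_Collect_eq)
qed

lemma blk_refl: assumes s: "\<sigma> \<in> graph_aut V E" and x: "x \<in> V" and y: "y \<in> V"
  and eq: "blk m C D (\<sigma> x) = blk m C D (\<sigma> y)"
  shows "blk m C D x = blk m C D y"
  using blk_pres[OF aut_inv_aut(1)[OF s] aut_V[OF s x] aut_V[OF s y] eq] aut_inv_aut(2)[OF s] x y by simp

end


context L4 begin

definition rep :: "nat + nat \<Rightarrow> 'a" where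
  "rep u = (case u of Inl i \<Rightarrow> SOME x. x \<in> C i | Inr r \<Rightarrow> SOME x. x \<in> D r)"

lemma cyc_ne: "induced_cycle E B k \<Longrightarrow> \<exists>x. x \<in> B"
proof -
  assume "induced_cycle E B k"
  then obtain f where k: "k \<ge> 3" and f: "bij_betw f {..<k} B" unfolding induced_cycle_def by blast
  have "0 \<in> {..<k}" using k by simp
  thus ?thesis using f bij_betwE by blast
qed

lemma rep: assumes u: "u \<in> cG_verts m" shows "rep u \<in> V" "blk m C D (rep u) = u"
proof -
  have "rep u \<in> V \<and> blk m C D (rep u) = u"
  proof (cases u)
    case (Inl i)
    hence i: "i < m" using u unfolding cG_verts_def by auto
    have "rep u \<in> C i" using someI_ex[OF cyc_ne[OF Ccyc[OF i]]] unfolding Inl rep_def by simp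
    thus ?thesis using Cprops[OF i] blk_C[OF i] Inl by simp
  next
    case (Inr i)
    hence i: "i < m" using u unfolding cG_verts_def by auto
    have "rep u \<in> D i" using someI_ex[OF cyc_ne[OF Dcyc[OF i]]] unfolding Inr rep_def by simp
    thus ?thesis using Dprops[OF i] blk_D[OF i] Inr by simp
  qed
  thus "rep u \<in> V" "blk m C D (rep u) = u" by auto
qed

definition gind :: "('a \<Rightarrow> 'a) \<Rightarrow> ((nat + nat) \<Rightarrow> (nat + nat)) \<times> ('a set \<Rightarrow> 'a set)" where
  "gind \<sigma> = ((\<lambda>u. if u \<in> cG_verts m then blk m C D (\<sigma> (rep u)) else u), (\<lambda>e. \<sigma> ` e))"

lemma gind_ind: assumes s: "\<sigma> \<in> graph_aut V E" shows "induced_aut m C D V \<sigma> (gind \<sigma>)"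
proof -
  have "blk m C D (\<sigma> (rep (blk m C D x))) = blk m C D (\<sigma> x)" if x: "x \<in> V" for x
    by (rule blk_pres[OF s rep(1)[OF blk_in[OF x]] x rep(2)[OF blk_in[OF x]]])
  thus ?thesis unfolding induced_aut_def gind_def using blk_in by simp
qed

lemma finG: "finite (cG_verts m)" unfolding cG_verts_def by simp

lemma edges_sub: "cG_edges V E z \<subseteq> Pow V" unfolding cG_edges_def by auto

lemma edgeI: "x \<in> V \<Longrightarrow> y \<in> V \<Longrightarrow> E x y \<Longrightarrow> z x = 1 \<Longrightarrow> z y = -1 \<Longrightarrow> {x, y} \<in> cG_edges V E z"
  unfolding cG_edges_def
  apply (rule CollectI)
  apply (rule exI[of _ x], rule exI[of _ y])
  by simp

lemma gind_aut: assumes s: "\<sigma> \<in> graph_aut V E"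
  shows "gind \<sigma> \<in> mg_aut (cG_verts m) (cG_edges V E z) (cG_inc m C D)"
proof -
  define \<phi> where "\<phi> = (\<lambda>u. if u \<in> cG_verts m then blk m C D (\<sigma> (rep u)) else u)"
  have g: "gind \<sigma> = (\<phi>, \<lambda>e. \<sigma> ` e)" unfolding gind_def \<phi>_def ..
  have phi_blk: "x \<in> V \<Longrightarrow> \<phi> (blk m C D x) = blk m C D (\<sigma> x)" for x
    using gind_ind[OF s] unfolding induced_aut_def g by simp
  have b1: "bij_betw \<phi> (cG_verts m) (cG_verts m)"
  proof -
    have sub: "\<phi> ` cG_verts m \<subseteq> cG_verts m"
    proof
      fix u' assume "u' \<in> \<phi> ` cG_verts m"
      then obtain u where u: "u \<in> cG_verts m" "u' = \<phi> u" by blast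
      have "u' = blk m C D (\<sigma> (rep u))" unfolding u(2) \<phi>_def using u(1) by simp
      thus "u' \<in> cG_verts m" using blk_in[OF aut_V[OF s rep(1)[OF u(1)]]] by simp
    qed
    have inj: "inj_on \<phi> (cG_verts m)"
    proof
      fix u u' assume u: "u \<in> cG_verts m" "u' \<in> cG_verts m" "\<phi> u = \<phi> u'"
      hence "blk m C D (\<sigma> (rep u)) = blk m C D (\<sigma> (rep u'))" unfolding \<phi>_def by simp
      hence "blk m C D (rep u) = blk m C D (rep u')" by (rule blk_refl[OF s rep(1)[OF u(1)] rep(1)[OF u(2)]])
      thus "u = u'" by (simp only: rep(2)[OF u(1)] rep(2)[OF u(2)])
    qed
    show ?thesis unfolding bij_betw_def using inj endo_inj_surj[OF finG sub inj] by simp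
  qed
  obtain c where c: "c = 1 \<or> c = -1" "\<forall>x\<in>V. z (\<sigma> x) = c * z x" using sign[OF s] by blast
  have b2: "bij_betw (\<lambda>e. \<sigma> ` e) (cG_edges V E z) (cG_edges V E z)"
  proof -
    have sub: "(\<lambda>e. \<sigma> ` e) ` cG_edges V E z \<subseteq> cG_edges V E z"
    proof
      fix e' assume "e' \<in> (\<lambda>e. \<sigma> ` e) ` cG_edges V E z"
      then obtain x y where e': "e' = {\<sigma> x, \<sigma> y}" and xy: "x \<in> V" "y \<in> V" "E x y" "z x = 1" "z y = -1"
        unfolding cG_edges_def by auto
      have Es: "E (\<sigma> x) (\<sigma> y)" "E (\<sigma> y) (\<sigma> x)" using aut_E[OF s xy(1,2)] xy(3) Esym by auto
      have V': "\<sigma> x \<in> V" "\<sigma> y \<in> V" using aut_V[OF s] xy by auto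
      from c(1) show "e' \<in> cG_edges V E z"
      proof
        assume "c = 1"
        hence "z (\<sigma> x) = 1" "z (\<sigma> y) = -1" using c(2) xy by auto
        thus ?thesis unfolding e' by (rule edgeI[OF V'(1) V'(2) Es(1)])
      next
        assume "c = -1"
        hence h: "e' = {\<sigma> y, \<sigma> x}" "z (\<sigma> y) = 1" "z (\<sigma> x) = -1" using e' c(2) xy by auto
        show ?thesis unfolding h(1) by (rule edgeI[OF V'(2) V'(1) Es(2) h(2) h(3)])
      qed
    qed
    have inj: "inj_on (\<lambda>e. \<sigma> ` e) (cG_edges V E z)"
      by (rule inj_on_subset[OF inj_on_image_Pow[OF bij_betw_imp_inj_on[OF aut_bij[OF s]]] edges_sub])
    have fin: "finite (cG_edges V E z)" 
      by (rule finite_subset[OF edges_sub]) (simp add: finV)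
    show ?thesis unfolding bij_betw_def using inj endo_inj_surj[OF fin sub inj] by simp
  qed
  have inc: "\<forall>e\<in>cG_edges V E z. cG_inc m C D (\<sigma> ` e) = \<phi> ` cG_inc m C D e"
  proof
    fix e assume e: "e \<in> cG_edges V E z"
    hence eV: "e \<subseteq> V" using edges_sub by auto
    show "cG_inc m C D (\<sigma> ` e) = \<phi> ` cG_inc m C D e"
    proof -
      have "\<phi> ` blk m C D ` e = (\<lambda>x. \<phi> (blk m C D x)) ` e" by (rule image_image)
      also have "\<dots> = (\<lambda>x. blk m C D (\<sigma> x)) ` e" using phi_blk eV by (intro image_cong) auto
      finally show ?thesis unfolding cG_inc_def image_image by simp
    qed
  qed
  show ?thesis unfolding g mg_aut_def using b1 b2 inc by simp
qed

end


lemma part2: "induced_aut m C D V \<sigma> g \<Longrightarrow> induced_aut m C D V \<tau> g \<Longrightarrow> \<sigma> = \<tau>"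
proof -
  assume a: "induced_aut m C D V \<sigma> g" "induced_aut m C D V \<tau> g"
  have "\<sigma> ` {x} = \<tau> ` {x}" for x
  proof -
    have "snd g {x} = \<sigma> ` {x}" using a(1) unfolding induced_aut_def by blast
    moreover have "snd g {x} = \<tau> ` {x}" using a(2) unfolding induced_aut_def by blast
    ultimately show ?thesis by simp
  qed
  thus "\<sigma> = \<tau>" by (intro ext) simp
qed
lemma arc_trans_mono: "arc_transitive_by VG EG inc A \<Longrightarrow> A \<subseteq> B \<Longrightarrow> arc_transitive_by VG EG inc B"
  unfolding arc_transitive_by_def by blast

context L4 begin

lemma edgeE: assumes "e \<in> cG_edges V E z"
  obtains x y where "e = {x, y}" "x \<in> V" "y \<in> V" "E x y" "z x = 1" "z y = -1"
  using assms unfolding cG_edges_def by blast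

lemma blk_P: assumes "x \<in> V" "z x = 1" shows "\<exists>i<m. blk m C D x = Inl i"
proof -
  obtain i where "i < m" "x \<in> C i" using Ccov assms by blast
  thus ?thesis using blk_C by blast
qed

lemma blk_N: assumes "x \<in> V" "z x = -1" shows "\<exists>i<m. blk m C D x = Inr i"
proof -
  obtain i where "i < m" "x \<in> D i" using Dcov assms by blast
  thus ?thesis using blk_D by blast
qed

lemma bip: "mg_bipartite_cd m (cG_edges V E z) (cG_inc m C D)"
  unfolding mg_bipartite_cd_def
proof
  fix e assume "e \<in> cG_edges V E z"
  then obtain x y where xy: "e = {x, y}" "x \<in> V" "y \<in> V" "E x y" "z x = 1" "z y = -1" by (rule edgeE)
  obtain i where i: "i < m" "blk m C D x = Inl i" using blk_P xy by blast
  obtain r where r: "r < m" "blk m C D y = Inr r" using blk_N xy by blast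
  have "cG_inc m C D e = {Inl i, Inr r}" unfolding cG_inc_def xy(1) using i r by simp
  thus "\<exists>i<m. \<exists>r<m. cG_inc m C D e = {Inl i, Inr r}" using i r by blast
qed

lemma opp_unique: assumes x: "x \<in> V" and y: "y1 \<in> V" "y2 \<in> V" "E x y1" "E x y2"
  "z y1 = - z x" "z y2 = - z x" shows "y1 = y2"
proof -
  obtain a where a: "{y\<in>V. E x y \<and> z y = - z x} = {a}" using opp_card[OF x] card_1_singletonE by blast
  have "y1 \<in> {a}" "y2 \<in> {a}" unfolding a[symmetric] using y by auto
  thus ?thesis by simp
qed

lemma arc_decomp: assumes a: "(e, u, v) \<in> mg_arcs (cG_verts m) (cG_edges V E z) (cG_inc m C D)"
  shows "\<exists>xa ya. e = {xa, ya} \<and> xa \<in> V \<and> ya \<in> V \<and> E xa ya \<and> z ya = - z xa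
     \<and> blk m C D xa = u \<and> blk m C D ya = v"
proof -
  have e: "e \<in> cG_edges V E z" and inc: "cG_inc m C D e = {u, v}" using a unfolding mg_arcs_def by auto
  obtain x y where xy: "e = {x, y}" "x \<in> V" "y \<in> V" "E x y" "z x = 1" "z y = -1" using e by (rule edgeE)
  obtain i where i: "blk m C D x = Inl i" using blk_P xy by blast
  obtain r where r: "blk m C D y = Inr r" using blk_N xy by blast
  have "{blk m C D x, blk m C D y} = {u, v}" using inc unfolding cG_inc_def xy(1) by simp
  moreover have "blk m C D x \<noteq> blk m C D y" using i r by simp
  ultimately have "(u = blk m C D x \<and> v = blk m C D y) \<or> (u = blk m C D y \<and> v = blk m C D x)"
    by (auto simp: doubleton_eq_iff)
  thus ?thesis
  proof
    assume h: "u = blk m C D x \<and> v = blk m C D y"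
    show ?thesis by (rule exI[of _ x], rule exI[of _ y]) (use xy h in simp)
  next
    assume h: "u = blk m C D y \<and> v = blk m C D x"
    have "e = {y, x}" using xy(1) by (simp add: insert_commute)
    moreover have "E y x" using Esym xy(4) .
    ultimately show ?thesis by (intro exI[of _ y] exI[of _ x]) (use xy h in simp)
  qed
qed

lemma arc_trans: assumes H: "H \<subseteq> graph_aut V E" and tr: "transitive_on H V"
  shows "arc_transitive_by (cG_verts m) (cG_edges V E z) (cG_inc m C D)
            {g\<in>mg_aut (cG_verts m) (cG_edges V E z) (cG_inc m C D). \<exists>\<sigma>\<in>H. induced_aut m C D V \<sigma> g}"
  unfolding arc_transitive_by_def
proof (intro ballI)
  fix a b assume a: "a \<in> mg_arcs (cG_verts m) (cG_edges V E z) (cG_inc m C D)"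
    and b: "b \<in> mg_arcs (cG_verts m) (cG_edges V E z) (cG_inc m C D)"
  obtain e u v where aa: "a = (e, u, v)" by (cases a) auto
  obtain e' u' v' where bb: "b = (e', u', v')" by (cases b) auto
  obtain xa ya where A: "e = {xa, ya}" "xa \<in> V" "ya \<in> V" "E xa ya" "z ya = - z xa"
     "blk m C D xa = u" "blk m C D ya = v" using arc_decomp a unfolding aa by blast
  obtain xb yb where B: "e' = {xb, yb}" "xb \<in> V" "yb \<in> V" "E xb yb" "z yb = - z xb"
     "blk m C D xb = u'" "blk m C D yb = v'" using arc_decomp b unfolding bb by blast
  obtain \<sigma> where sH: "\<sigma> \<in> H" and sx: "\<sigma> xa = xb" using tr A(2) B(2) unfolding transitive_on_def by blast
  have s: "\<sigma> \<in> graph_aut V E" using sH H by blast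
  obtain c where c: "c = 1 \<or> c = -1" "\<forall>x\<in>V. z (\<sigma> x) = c * z x" using sign[OF s] by blast
  have syV: "\<sigma> ya \<in> V" using aut_V[OF s A(3)] .
  have Ey: "E xb (\<sigma> ya)" using aut_E[OF s A(2) A(3)] A(4) sx by simp
  have zy: "z (\<sigma> ya) = - z xb"
  proof -
    have "z (\<sigma> ya) = c * z ya" using c(2) A(3) by blast
    also have "\<dots> = - (c * z xa)" using A(5) by simp
    also have "c * z xa = z xb" using c(2) A(2) sx by metis
    finally show ?thesis .
  qed
  have sy: "\<sigma> ya = yb" by (rule opp_unique[OF B(2) syV B(3) Ey B(4) zy B(5)])
  let ?g = "gind \<sigma>"
  have gA: "?g \<in> mg_aut (cG_verts m) (cG_edges V E z) (cG_inc m C D)" by (rule gind_aut[OF s])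
  have gI: "induced_aut m C D V \<sigma> ?g" by (rule gind_ind[OF s])
  have gI1: "\<And>x. x \<in> V \<Longrightarrow> fst ?g (blk m C D x) = blk m C D (\<sigma> x)"
    using gI unfolding induced_aut_def by blast
  have gI2: "snd ?g e = \<sigma> ` e" using gI unfolding induced_aut_def by blast
  have f1: "fst ?g u = u'" using gI1[OF A(2)] unfolding A(6) sx B(6) .
  have f2: "fst ?g v = v'" using gI1[OF A(3)] unfolding A(7) sy B(7) .
  have f3: "snd ?g e = e'" using gI2 sx sy unfolding A(1) B(1) by simp
  obtain g1 g2 where gg: "?g = (g1, g2)" by (cases ?g) blast
  have "mg_arc_map ?g a = (snd ?g e, fst ?g u, fst ?g v)" unfolding aa mg_arc_map_def gg by simp
  hence "mg_arc_map ?g a = b" unfolding bb f1 f2 f3 .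
  moreover have "?g \<in> {g\<in>mg_aut (cG_verts m) (cG_edges V E z) (cG_inc m C D). \<exists>\<sigma>\<in>H. induced_aut m C D V \<sigma> g}"
    using gA gI sH by blast
  ultimately show "\<exists>g\<in>{g\<in>mg_aut (cG_verts m) (cG_edges V E z) (cG_inc m C D). \<exists>\<sigma>\<in>H. induced_aut m C D V \<sigma> g}.
           mg_arc_map g a = b" by blast
qed

lemma part1: "\<forall>\<sigma>\<in>graph_aut V E. \<exists>g\<in>mg_aut (cG_verts m) (cG_edges V E z) (cG_inc m C D).
              induced_aut m C D V \<sigma> g"
proof
  fix \<sigma> assume s: "\<sigma> \<in> graph_aut V E"
  show "\<exists>g\<in>mg_aut (cG_verts m) (cG_edges V E z) (cG_inc m C D). induced_aut m C D V \<sigma> g"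
    using gind_aut[OF s] gind_ind[OF s] by blast
qed

lemma part3: "\<forall>H. aut_subgroup V E H \<and> transitive_on H V \<longrightarrow>
          arc_transitive_by (cG_verts m) (cG_edges V E z) (cG_inc m C D)
            {g\<in>mg_aut (cG_verts m) (cG_edges V E z) (cG_inc m C D). \<exists>\<sigma>\<in>H. induced_aut m C D V \<sigma> g}"
proof (intro allI impI)
  fix H assume h: "aut_subgroup V E H \<and> transitive_on H V"
  have "H \<subseteq> graph_aut V E" using h unfolding aut_subgroup_def by (elim conjE)
  moreover have "transitive_on H V" using h by (elim conjE)
  ultimately show "arc_transitive_by (cG_verts m) (cG_edges V E z) (cG_inc m C D)
            {g\<in>mg_aut (cG_verts m) (cG_edges V E z) (cG_inc m C D). \<exists>\<sigma>\<in>H. induced_aut m C D V \<sigma> g}"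
    by (rule arc_trans)
qed

lemma part4: assumes vt: "vertex_transitive V E"
  shows "mg_arc_transitive (cG_verts m) (cG_edges V E z) (cG_inc m C D)"
proof -
  have tr: "transitive_on (graph_aut V E) V" using vt
    unfolding vertex_transitive_def transitive_on_def .
  have sub: "{g\<in>mg_aut (cG_verts m) (cG_edges V E z) (cG_inc m C D). \<exists>\<sigma>\<in>graph_aut V E. induced_aut m C D V \<sigma> g}
     \<subseteq> mg_aut (cG_verts m) (cG_edges V E z) (cG_inc m C D)" by (rule subsetI) (elim CollectE conjE)
  show ?thesis unfolding mg_arc_transitive_def
    by (rule arc_trans_mono[OF arc_trans[OF subset_refl tr] sub])
qed

end

theorem lemma4p2:
  fixes V :: "'a set" and E :: "'a \<Rightarrow> 'a \<Rightarrow> bool" and z :: "'a \<Rightarrow> real"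
    and m k :: nat and C D :: "nat \<Rightarrow> 'a set"
  assumes "simple_graph V E" and "cubic V E" and "vertex_transitive V E"
    and "simple_eigenvalue V E 1"
    and "\<forall>x\<in>V. z x = 1 \<or> z x = -1"
    and "is_eigvec V E 1 z"
    and "cycle_decomp E {x\<in>V. z x = 1} m C k"
    and "cycle_decomp E {x\<in>V. z x = -1} m D k"
  shows "(\<forall>\<sigma>\<in>graph_aut V E. \<exists>g\<in>mg_aut (cG_verts m) (cG_edges V E z) (cG_inc m C D).
              induced_aut m C D V \<sigma> g)
    \<and> (\<forall>\<sigma>\<in>graph_aut V E. \<forall>\<tau>\<in>graph_aut V E.
              (\<exists>g. induced_aut m C D V \<sigma> g \<and> induced_aut m C D V \<tau> g) \<longrightarrow> \<sigma> = \<tau>)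
    \<and> (\<forall>H. aut_subgroup V E H \<and> transitive_on H V \<longrightarrow>
          arc_transitive_by (cG_verts m) (cG_edges V E z) (cG_inc m C D)
            {g\<in>mg_aut (cG_verts m) (cG_edges V E z) (cG_inc m C D). \<exists>\<sigma>\<in>H. induced_aut m C D V \<sigma> g})
    \<and> mg_arc_transitive (cG_verts m) (cG_edges V E z) (cG_inc m C D)
    \<and> mg_bipartite_cd m (cG_edges V E z) (cG_inc m C D)"
proof -
  interpret L: L4 V E z m k C D
    by (rule L4.intro) (rule assms)+
  have p2: "\<forall>\<sigma>\<in>graph_aut V E. \<forall>\<tau>\<in>graph_aut V E.
              (\<exists>g. induced_aut m C D V \<sigma> g \<and> induced_aut m C D V \<tau> g) \<longrightarrow> \<sigma> = \<tau>"
    using part2 by blast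
  show ?thesis by (intro conjI L.part1 p2 L.part3 L.part4[OF assms(3)] L.bip)
qed


end
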